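(* $\mathrm{Sort}(\mathrm{SC}_{1\underline{23}})$ is a permutation class.
   Context: $\mathfrak S_n$ is the set of permutations of $\{1,\dots,n\}$. A permutation $\pi$ contains a (classical) permutation $\tau$ if some subsequence of $\pi$ has the same relative order as $\tau$. A permutation class is a set $\Pi$ of permutations such that every permutation contained in some $\pi\in\Pi$ is also in $\Pi$. A vincular pattern is a permutation with some entries underlined; a sequence contains it if it has a subsequence with the same relative order in which entries corresponding to adjacent underlined entries occupy consecutive positions. An occurrence of $1\underline{23}$ is $a_i a_j a_{j+1}$ with $i<j$ and $a_i<a_j<a_{j+1}$. For a pattern $\sigma$, the map $\mathrm{SC}_\sigma$ acts on $\tau$: read entries left to right; when the next entry $x$ is read, if pushing $x$ yields a stack whose entries read top to bottom (stack adjacency = consecutive positions) avoid $\sigma$, push $x$; otherwise pop the top stack entry to the output and repeat. At the end pop all remaining entries; the output is $\mathrm{SC}_\sigma(\tau)$. West's stack-sorting map is $s=\mathrm{SC}_{21}$. $\mathrm{Sort}_n(\mathrm{SC}_\sigma)=\{\tau\in\mathfrak S_n : s(\mathrm{SC}_\sigma(\tau))=12\cdots n\}$ and $\mathrm{Sort}(\mathrm{SC}_\sigma)=\bigcup_{n\ge1}\mathrm{Sort}_n(\mathrm{SC}_\sigma)$. *)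

theory Defs
  imports Main
begin

definition is_perm :: "nat list \<Rightarrow> bool" where
  "is_perm p \<longleftrightarrow> p \<noteq> [] \<and> distinct p \<and> set p = {1..length p}"

definition perms :: "nat \<Rightarrow> nat list set" where
  "perms n = {p. is_perm p \<and> length p = n}"

text \<open>Occurrence of a vincular pattern: the pattern is a list tau; adj is the set of
  positions k (0-based) such that entries k and k+1 of the pattern are underlined together,
  i.e. must occupy consecutive positions.\<close>
definition occurs_vinc :: "nat list \<Rightarrow> nat set \<Rightarrow> nat list \<Rightarrow> bool" where
  "occurs_vinc tau adj a \<longleftrightarrow>
     (\<exists>idx :: nat list. length idx = length tau \<and> sorted_wrt (<) idx \<and>
        (\<forall>k<length idx. idx ! k < length a) \<and>
        (\<forall>k<length tau. \<forall>l<length tau. tau ! k < tau ! l \<longleftrightarrow> a ! (idx ! k) < a ! (idx ! l)) \<and>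
        (\<forall>k. k \<in> adj \<longrightarrow> Suc k < length tau \<longrightarrow> idx ! Suc k = Suc (idx ! k)))"

definition contains :: "nat list \<Rightarrow> nat list \<Rightarrow> bool" where
  "contains pi tau \<longleftrightarrow> occurs_vinc tau {} pi"

definition perm_class :: "nat list set \<Rightarrow> bool" where
  "perm_class P \<longleftrightarrow> (\<forall>p\<in>P. is_perm p) \<and>
     (\<forall>p\<in>P. \<forall>t. is_perm t \<and> contains p t \<longrightarrow> t \<in> P)"

text \<open>The stack is a list whose head is the top, so the
  list itself is the stack read top to bottom. Pushing onto an empty stack is always allowed
  (a one-element stack avoids every pattern of length at least 2).\<close>
function sc_aux :: "nat list \<Rightarrow> nat set \<Rightarrow> nat list \<Rightarrow> nat list \<Rightarrow> nat list" where
  "sc_aux tau adj [] st = st"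
| "sc_aux tau adj (x # xs) st =
     (if st = [] \<or> \<not> occurs_vinc tau adj (x # st) then sc_aux tau adj xs (x # st)
      else hd st # sc_aux tau adj (x # xs) (tl st))"
  by pat_completeness auto
termination
  by (relation "measure (\<lambda>(tau, adj, xs, st). 2 * length xs + length st)") auto

definition SC :: "nat list \<Rightarrow> nat set \<Rightarrow> nat list \<Rightarrow> nat list" where
  "SC tau adj p = sc_aux tau adj p []"

definition west_s :: "nat list \<Rightarrow> nat list" where
  "west_s p = SC [2,1] {} p"

definition Sort_n :: "nat list \<Rightarrow> nat set \<Rightarrow> nat \<Rightarrow> nat list set" where
  "Sort_n tau adj n = {p \<in> perms n. west_s (SC tau adj p) = [1..<n+1]}"

definition Sort :: "nat list \<Rightarrow> nat set \<Rightarrow> nat list set" where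
  "Sort tau adj = (\<Union>n\<in>{1..}. Sort_n tau adj n)"

abbreviation pat_1_23 :: "nat list" where "pat_1_23 \<equiv> [1,2,3]"
abbreviation adj_1_23 :: "nat set" where "adj_1_23 \<equiv> {1}"

end

theory Submission
  imports Defs "HOL-Library.Multiset"
begin
fun bef :: "nat list \<Rightarrow> nat \<Rightarrow> nat \<Rightarrow> bool" where
  "bef [] u v = False"
| "bef (x # xs) u v = ((u = x \<and> v \<in> set xs) \<or> bef xs u v)"

lemma bef_set: "bef w u v \<Longrightarrow> u \<in> set w \<and> v \<in> set w"
  by (induction w) auto

lemma bef_append: "bef (A @ B) u v \<longleftrightarrow> bef A u v \<or> bef B u v \<or> (u \<in> set A \<and> v \<in> set B)"
  by (induction A) (auto dest: bef_set)

lemma bef_rev: "bef (rev A) u v \<longleftrightarrow> bef A v u"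
  by (induction A) (auto simp: bef_append dest: bef_set)

lemma bef_sorted: "sorted_wrt R A \<Longrightarrow> bef A u v \<Longrightarrow> R u v"
  by (induction A) auto

lemma bef_distinct: "distinct A \<Longrightarrow> bef A u v \<Longrightarrow> u \<noteq> v"
  by (induction A) (auto dest: bef_set)

lemma bef_nth: "i < j \<Longrightarrow> j < length w \<Longrightarrow> bef w (w!i) (w!j)"
proof (induction w arbitrary: i j)
  case Nil then show ?case by simp
next
  case (Cons x xs)
  show ?case
  proof (cases i)
    case 0
    then obtain j' where "j = Suc j'" using Cons by (cases j) auto
    then show ?thesis using 0 Cons by auto
  next
    case (Suc i')
    then obtain j' where "j = Suc j'" using Cons by (cases j) auto
    then show ?thesis using Suc Cons by auto
  qed
qed

lemma bef_ex: "bef w u v \<Longrightarrow> \<exists>i j. i < j \<and> j < length w \<and> w!i = u \<and> w!j = v"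
proof (induction w)
  case Nil then show ?case by simp
next
  case (Cons x xs)
  show ?case
  proof (cases "u = x \<and> v \<in> set xs")
    case True
    then obtain j where "j < length xs" "xs!j = v" by (auto simp: in_set_conv_nth)
    then show ?thesis using True by (intro exI[of _ 0] exI[of _ "Suc j"]) auto
  next
    case False
    then have "bef xs u v" using Cons by auto
    then obtain i j where "i < j \<and> j < length xs \<and> xs!i = u \<and> xs!j = v" using Cons by blast
    then show ?thesis by (intro exI[of _ "Suc i"] exI[of _ "Suc j"]) auto
  qed
qed

lemma bef_idx:
  assumes "distinct w" "i < length w" "j < length w"
  shows "bef w (w!i) (w!j) \<longleftrightarrow> i < j"
proof
  assume "bef w (w!i) (w!j)"
  then obtain i' j' where h: "i' < j'" "j' < length w" "w!i' = w!i" "w!j' = w!j" using bef_ex by blast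
  moreover have "i' = i" using h assms by (simp add: nth_eq_iff_index_eq)
  moreover have "j' = j" using h assms by (simp add: nth_eq_iff_index_eq)
  ultimately show "i < j" by simp
qed (simp add: bef_nth assms)

lemma all3: "(\<forall>k<(3::nat). P k) \<longleftrightarrow> P 0 \<and> P 1 \<and> P 2"
  by (auto simp: less_Suc_eq eval_nat_numeral)
lemma all2: "(\<forall>k<(2::nat). P k) \<longleftrightarrow> P 0 \<and> P 1"
  by (auto simp: less_Suc_eq eval_nat_numeral)

lemma occ123_iff:
  "occurs_vinc [1,2,3] {1} w \<longleftrightarrow> (\<exists>i j. i < j \<and> Suc j < length w \<and> w!i < w!j \<and> w!j < w!Suc j)"
proof
  assume "occurs_vinc [1,2,3] {1} w"
  then obtain idx where h: "length idx = length [1,2,3::nat]" "sorted_wrt (<) idx" "\<forall>k<length idx. idx!k < length w"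
    "\<forall>k<length [1,2,3::nat]. \<forall>l<length [1,2,3::nat]. [1,2,3::nat]!k < [1,2,3]!l \<longleftrightarrow> w!(idx!k) < w!(idx!l)"
    "\<forall>k. k \<in> {1} \<longrightarrow> Suc k < length [1,2,3::nat] \<longrightarrow> idx ! Suc k = Suc (idx ! k)"
    unfolding occurs_vinc_def by blast
  have "idx!0 < idx!1" using h(1,2) by (simp add: sorted_wrt_nth_less)
  moreover have "w!(idx!0) < w!(idx!1)" using h(4)[rule_format, of 0 1] by simp
  moreover have "w!(idx!1) < w!(idx!2)" using h(4)[rule_format, of 1 2] by simp
  moreover have "idx!2 < length w" using h(3)[rule_format, of 2] h(1) by simp
  moreover have "idx!2 = Suc (idx!1)" using h(5)[rule_format, of 1] by (simp add: eval_nat_numeral)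
  ultimately show "\<exists>i j. i < j \<and> Suc j < length w \<and> w!i < w!j \<and> w!j < w!Suc j"
    by metis
next
  assume "\<exists>i j. i < j \<and> Suc j < length w \<and> w!i < w!j \<and> w!j < w!Suc j"
  then obtain i j where h: "i < j" "Suc j < length w" "w!i < w!j" "w!j < w!Suc j" by blast
  show "occurs_vinc [1,2,3] {1} w"
    unfolding occurs_vinc_def
    apply (rule exI[of _ "[i,j,Suc j]"])
    using h by (auto simp: less_Suc_eq eval_nat_numeral)
qed

lemma occ21_iff:
  "occurs_vinc [2,1] {} w \<longleftrightarrow> (\<exists>u v. bef w u v \<and> v < u)"
proof
  assume "occurs_vinc [2,1] {} w"
  then obtain idx where h: "length idx = length [2,1::nat]" "sorted_wrt (<) idx" "\<forall>k<length idx. idx!k < length w"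
    "\<forall>k<length [2,1::nat]. \<forall>l<length [2,1::nat]. [2,1::nat]!k < [2,1]!l \<longleftrightarrow> w!(idx!k) < w!(idx!l)"
    unfolding occurs_vinc_def by blast
  have "idx!0 < idx!1" using h(1,2) by (simp add: sorted_wrt_nth_less)
  moreover have "w!(idx!1) < w!(idx!0)" using h(4)[rule_format, of 1 0] by simp
  moreover have "idx!1 < length w" using h(3)[rule_format, of 1] h(1) by simp
  ultimately show "\<exists>u v. bef w u v \<and> v < u" using bef_nth by blast
next
  assume "\<exists>u v. bef w u v \<and> v < u"
  then obtain i j where h: "i < j" "j < length w" "w!j < w!i" using bef_ex by blast
  show "occurs_vinc [2,1] {} w"
    unfolding occurs_vinc_def
    apply (rule exI[of _ "[i,j]"])
    using h by (auto simp: less_Suc_eq eval_nat_numeral)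
qed

declare sc_aux.simps(2)[simp del]

lemma sc_Nil_st: "sc_aux tau adj (x # xs) [] = sc_aux tau adj xs [x]"
  by (simp add: sc_aux.simps(2))

lemma sc_Cons_st: "sc_aux tau adj (x # xs) (s # ss) =
  (if \<not> occurs_vinc tau adj (x # s # ss) then sc_aux tau adj xs (x # s # ss)
   else s # sc_aux tau adj (x # xs) ss)"
  by (simp add: sc_aux.simps(2))

fun popf :: "nat list \<Rightarrow> nat set \<Rightarrow> nat \<Rightarrow> nat list \<Rightarrow> nat list \<times> nat list" where
  "popf tau adj x [] = ([], [])"
| "popf tau adj x (s # ss) = (if \<not> occurs_vinc tau adj (x # s # ss) then ([], s # ss)
     else (s # fst (popf tau adj x ss), snd (popf tau adj x ss)))"

lemma popf_app: "fst (popf tau adj x st) @ snd (popf tau adj x st) = st"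
  by (induction st) auto

lemma sc_step: "sc_aux tau adj (x # xs) st =
  fst (popf tau adj x st) @ sc_aux tau adj xs (x # snd (popf tau adj x st))"
  by (induction st) (auto simp: sc_Nil_st sc_Cons_st)

fun run :: "nat list \<Rightarrow> nat set \<Rightarrow> nat list \<Rightarrow> nat list \<Rightarrow> nat list \<times> nat list" where
  "run tau adj [] st = ([], st)"
| "run tau adj (x # xs) st = (let r = popf tau adj x st; r2 = run tau adj xs (x # snd r) in (fst r @ fst r2, snd r2))"

lemma sc_append: "sc_aux tau adj (xs @ ys) st = fst (run tau adj xs st) @ sc_aux tau adj ys (snd (run tau adj xs st))"
  by (induction xs arbitrary: st) (auto simp: sc_step Let_def)

lemma sc_run: "sc_aux tau adj xs st = fst (run tau adj xs st) @ snd (run tau adj xs st)"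
  using sc_append[of tau adj xs "[]" st] by simp

lemma run_snoc: "run tau adj (xs @ [x]) st =
  (fst (run tau adj xs st) @ fst (popf tau adj x (snd (run tau adj xs st))), x # snd (popf tau adj x (snd (run tau adj xs st))))"
  by (induction xs arbitrary: st) (auto simp: Let_def)

lemma sc_mset: "mset (sc_aux tau adj xs st) = mset xs + mset st"
proof (induction tau adj xs st rule: sc_aux.induct)
  case (1 tau adj st) then show ?case by simp
next
  case (2 tau adj x xs st)
  then show ?case by (cases st) (auto simp: sc_Nil_st sc_Cons_st)
qed

abbreviation W :: "nat list \<Rightarrow> nat list" where "W w \<equiv> sc_aux [2,1] {} w []"

definition c231 :: "nat list \<Rightarrow> bool" where
  "c231 w \<longleftrightarrow> (\<exists>a b c. bef w b c \<and> bef w c a \<and> a < b \<and> b < c)"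

lemma sc_set: "set (sc_aux tau adj xs st) = set xs \<union> set st"
  using sc_mset[of tau adj xs st] by (metis set_mset_mset set_mset_union)

lemma W_max_pop: "\<forall>s\<in>set st. s < n \<Longrightarrow> popf [2,1] {} n st = (st, [])"
proof (induction st)
  case Nil then show ?case by simp
next
  case (Cons s ss)
  have "occurs_vinc [2,1] {} (n # s # ss)" unfolding occ21_iff
    using Cons.prems by (intro exI[of _ n] exI[of _ s]) auto
  then show ?case using Cons by auto
qed

lemma occ21_snoc_max:
  assumes "\<forall>y\<in>set w. y < n"
  shows "occurs_vinc [2,1] {} (w @ [n]) \<longleftrightarrow> occurs_vinc [2,1] {} w"
  unfolding occ21_iff using assms by (auto simp: bef_append dest: bef_set)

lemma W_bottom:
  "\<forall>y\<in>set xs \<union> set st. y < n \<Longrightarrow> sc_aux [2,1] {} xs (st @ [n]) = sc_aux [2,1] {} xs st @ [n]"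
proof (induction "2 * length xs + length st" arbitrary: xs st rule: less_induct)
  case less
  show ?case
  proof (cases xs)
    case Nil then show ?thesis by simp
  next
    case (Cons x xs')
    show ?thesis
    proof (cases st)
      case Nil
      have "\<not> occurs_vinc [2,1] {} [x, n]" unfolding occ21_iff using less.prems Cons
        by auto
      then have "sc_aux [2,1] {} xs ([] @ [n]) = sc_aux [2,1] {} xs' ([x] @ [n])"
        using Cons by (simp add: sc_Cons_st)
      also have "\<dots> = sc_aux [2,1] {} xs' [x] @ [n]"
        using less(1)[of xs' "[x]"] less.prems Cons by simp
      finally show ?thesis using Nil Cons by (simp add: sc_Nil_st)
    next
      case Cons2: (Cons s ss)
      have eq: "occurs_vinc [2,1] {} (x # s # ss @ [n]) \<longleftrightarrow> occurs_vinc [2,1] {} (x # s # ss)"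
        using occ21_snoc_max[of "x # s # ss" n] less.prems Cons Cons2 by auto
      show ?thesis
      proof (cases "occurs_vinc [2,1] {} (x # s # ss)")
        case True
        then have "sc_aux [2,1] {} xs (st @ [n]) = s # sc_aux [2,1] {} xs (ss @ [n])"
          using eq Cons Cons2 by (simp add: sc_Cons_st)
        also have "\<dots> = s # (sc_aux [2,1] {} xs ss @ [n])"
          using less Cons2 by auto
        finally show ?thesis using True Cons Cons2 by (simp add: sc_Cons_st)
      next
        case False
        then have "sc_aux [2,1] {} xs (st @ [n]) = sc_aux [2,1] {} xs' ((x # s # ss) @ [n])"
          using eq Cons Cons2 by (simp add: sc_Cons_st)
        also have "\<dots> = sc_aux [2,1] {} xs' (x # s # ss) @ [n]"
          using less(1)[of xs' "x # s # ss"] less.prems Cons Cons2 by simp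
        finally show ?thesis using False Cons Cons2 by (simp add: sc_Cons_st)
      qed
    qed
  qed
qed

lemma W_split:
  assumes "\<forall>y\<in>set al \<union> set be. y < n"
  shows "W (al @ n # be) = W al @ W be @ [n]"
proof -
  let ?O = "fst (run [2,1] {} al [])" and ?S = "snd (run [2,1] {} al [])"
  have setS: "set ?S \<subseteq> set al" using sc_set[of "[2,1]" "{}" al "[]"] sc_run[of "[2,1]" "{}" al "[]"]
    by auto
  have "W (al @ n # be) = ?O @ sc_aux [2,1] {} (n # be) ?S" by (rule sc_append)
  also have "\<dots> = ?O @ ?S @ sc_aux [2,1] {} be [n]"
  proof -
    have "\<forall>s\<in>set ?S. s < n" using setS assms by auto
    then show ?thesis using W_max_pop[of ?S n] by (simp add: sc_step)
  qed
  also have "sc_aux [2,1] {} be [n] = W be @ [n]"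
    using W_bottom[of be "[]" n] assms by simp
  finally show ?thesis using sc_run[of "[2,1]" "{}" al "[]"] by simp
qed

lemma bef_appL: "bef (A @ B) u v \<Longrightarrow> v \<notin> set B \<Longrightarrow> bef A u v"
  by (auto simp: bef_append dest: bef_set)
lemma bef_appR: "bef (A @ B) u v \<Longrightarrow> u \<notin> set A \<Longrightarrow> bef B u v"
  by (auto simp: bef_append dest: bef_set)

lemma c231_mono_app: "c231 A \<Longrightarrow> c231 (A @ B)"
  unfolding c231_def by (auto simp: bef_append)
lemma c231_mono_pre: "c231 B \<Longrightarrow> c231 (A @ B)"
  unfolding c231_def by (auto simp: bef_append)

lemma West_iff:
  "distinct w \<Longrightarrow> sorted_wrt (<) (W w) \<longleftrightarrow> \<not> c231 w"
proof (induction "length w" arbitrary: w rule: less_induct)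
  case less
  show ?case
  proof (cases "w = []")
    case True then show ?thesis by (simp add: c231_def)
  next
    case False
    define n where "n = Max (set w)"
    have nin: "n \<in> set w" using False n_def by simp
    then obtain al be where w: "w = al @ n # be" by (meson split_list)
    have dist: "distinct al" "distinct be" "n \<notin> set al" "n \<notin> set be" "set al \<inter> set be = {}"
      using less.prems w by auto
    have lt: "\<forall>y\<in>set al \<union> set be. y < n"
    proof
      fix y assume "y \<in> set al \<union> set be"
      then have "y \<in> set w" using w by auto
      then have "y \<le> n" using n_def by simp
      moreover have "y \<noteq> n" using \<open>y \<in> set al \<union> set be\<close> dist by auto
      ultimately show "y < n" by simp
    qed
    have IHa: "sorted_wrt (<) (W al) \<longleftrightarrow> \<not> c231 al" using less w dist by auto
    have IHb: "sorted_wrt (<) (W be) \<longleftrightarrow> \<not> c231 be" using less w dist by auto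
    have sW: "set (W al) = set al" "set (W be) = set be" using sc_set by auto
    have "sorted_wrt (<) (W w) \<longleftrightarrow> sorted_wrt (<) (W al) \<and> sorted_wrt (<) (W be) \<and> (\<forall>a\<in>set al. \<forall>b\<in>set be. a < b)"
    proof -
      have "W w = W al @ W be @ [n]" using W_split[OF lt] w by simp
      then have "sorted_wrt (<) (W w) \<longleftrightarrow> sorted_wrt (<) (W al) \<and> (sorted_wrt (<) (W be) \<and> (\<forall>y\<in>set be. y < n))
         \<and> (\<forall>x\<in>set al. \<forall>y\<in>set be \<union> {n}. x < y)"
        by (simp only: sorted_wrt_append sW set_append) simp
      then show ?thesis using lt by auto
    qed
    also have "\<dots> \<longleftrightarrow> \<not> c231 w"
    proof
      assume H: "sorted_wrt (<) (W al) \<and> sorted_wrt (<) (W be) \<and> (\<forall>a\<in>set al. \<forall>b\<in>set be. a < b)"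
      show "\<not> c231 w"
      proof
        assume "c231 w"
        then obtain a b c where abc: "bef w b c" "bef w c a" "a < b" "b < c" unfolding c231_def by blast
        have "c \<le> n" using bef_set[OF abc(1)] n_def by simp
        then have "b \<noteq> n" "a \<noteq> n" using abc by auto
        show False
        proof (cases "a \<in> set be")
          case True
          show False
          proof (cases "b \<in> set al")
            case True
            then have "b < a" using H \<open>a \<in> set be\<close> by blast
            then show False using abc by simp
          next
            case False
            have "b \<in> set w" using bef_set[OF abc(1)] by simp
            then have "b \<in> set be" using False \<open>b \<noteq> n\<close> w by auto
            have "bef (n # be) b c" using bef_appR[of al "n # be" b c] abc(1) w False by simp
            then have "bef be b c" using \<open>b \<noteq> n\<close> by simp
            then have "c \<in> set be" using bef_set by simp
            then have "c \<notin> set al" "c \<noteq> n" using dist by auto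
            have "bef (n # be) c a" using bef_appR[of al "n # be" c a] abc(2) w \<open>c \<notin> set al\<close> by simp
            then have "bef be c a" using \<open>c \<noteq> n\<close> by simp
            then have "c231 be" unfolding c231_def using \<open>bef be b c\<close> abc by (intro exI[of _ a] exI[of _ b] exI[of _ c]) simp
            then show False using H IHb by simp
          qed
        next
          case False
          have "a \<in> set w" using bef_set[OF abc(2)] by simp
          then have "a \<in> set al" using False \<open>a \<noteq> n\<close> w by auto
          have "bef al c a" using bef_appL[of al "n # be" c a] abc(2) w False \<open>a \<noteq> n\<close> by simp
          then have "c \<in> set al" using bef_set by simp
          then have "c \<notin> set (n # be)" using dist by auto
          have "bef al b c" using bef_appL[of al "n # be" b c] abc(1) w \<open>c \<notin> set (n # be)\<close> by simp
          then have "c231 al" unfolding c231_def using \<open>bef al c a\<close> abc by (intro exI[of _ a] exI[of _ b] exI[of _ c]) simp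
          then show False using H IHa by simp
        qed
      qed
    next
      assume H: "\<not> c231 w"
      have "\<not> c231 al" using H c231_mono_app[of al "n # be"] unfolding w by blast
      moreover have "\<not> c231 be"
      proof
        assume "c231 be"
        then have "c231 ((al @ [n]) @ be)" by (rule c231_mono_pre)
        moreover have "(al @ [n]) @ be = w" using w by simp
        ultimately show False using H by simp
      qed
      moreover have "\<forall>a\<in>set al. \<forall>b\<in>set be. a < b"
      proof (intro ballI, rule ccontr)
        fix a b assume ab: "a \<in> set al" "b \<in> set be" "\<not> a < b"
        then have "a \<noteq> b" using dist by blast
        then have "b < a" using ab by simp
        moreover have "a < n" using lt ab by auto
        moreover have "bef w a n" "bef w n b" using ab unfolding w by (simp_all add: bef_append)
        ultimately have "c231 w" unfolding c231_def by (intro exI[of _ b] exI[of _ a] exI[of _ n]) simp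
        then show False using H by simp
      qed
      ultimately show "sorted_wrt (<) (W al) \<and> sorted_wrt (<) (W be) \<and> (\<forall>a\<in>set al. \<forall>b\<in>set be. a < b)"
        using IHa IHb by simp
    qed
    finally show ?thesis .
  qed
qed

fun ascgt :: "nat \<Rightarrow> nat list \<Rightarrow> bool" where
  "ascgt x (u # v # r) = ((x < u \<and> u < v) \<or> ascgt x (v # r))"
| "ascgt x _ = False"

fun occ3 :: "nat list \<Rightarrow> bool" where
  "occ3 [] = False"
| "occ3 (y # ys) = (ascgt y ys \<or> occ3 ys)"

lemma ascgt_iff: "ascgt x ys \<longleftrightarrow> (\<exists>j. Suc j < length ys \<and> x < ys!j \<and> ys!j < ys!Suc j)"
proof (induction x ys rule: ascgt.induct)
  case (1 x u v r)
  show ?case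
  proof
    assume "ascgt x (u # v # r)"
    then have "(x < u \<and> u < v) \<or> ascgt x (v # r)" by simp
    then show "\<exists>j. Suc j < length (u # v # r) \<and> x < (u # v # r)!j \<and> (u # v # r)!j < (u # v # r)!Suc j"
    proof
      assume "x < u \<and> u < v" then show ?thesis by (intro exI[of _ 0]) auto
    next
      assume "ascgt x (v # r)"
      then obtain j where "Suc j < length (v # r) \<and> x < (v # r)!j \<and> (v # r)!j < (v # r)!Suc j" using 1 by blast
      then show ?thesis by (intro exI[of _ "Suc j"]) auto
    qed
  next
    assume "\<exists>j. Suc j < length (u # v # r) \<and> x < (u # v # r)!j \<and> (u # v # r)!j < (u # v # r)!Suc j"
    then obtain j where j: "Suc j < length (u # v # r)" "x < (u # v # r)!j" "(u # v # r)!j < (u # v # r)!Suc j" by blast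
    show "ascgt x (u # v # r)"
    proof (cases j)
      case 0 then show ?thesis using j by simp
    next
      case (Suc j')
      then have "ascgt x (v # r)" using 1 j by (intro iffD2[OF 1]) (intro exI[of _ j'], auto)
      then show ?thesis by simp
    qed
  qed
next
  case ("2_1" x) then show ?case by simp
next
  case ("2_2" x v) then show ?case by simp
qed

lemma occ3_iff: "occ3 w \<longleftrightarrow> (\<exists>i j. i < j \<and> Suc j < length w \<and> w!i < w!j \<and> w!j < w!Suc j)"
proof (induction w)
  case Nil then show ?case by simp
next
  case (Cons y ys)
  show ?case
  proof
    assume "occ3 (y # ys)"
    then show "\<exists>i j. i < j \<and> Suc j < length (y # ys) \<and> (y # ys)!i < (y # ys)!j \<and> (y # ys)!j < (y # ys)!Suc j"
    proof (cases "ascgt y ys")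
      case True
      then obtain j where "Suc j < length ys \<and> y < ys!j \<and> ys!j < ys!Suc j" using ascgt_iff by blast
      then show ?thesis by (intro exI[of _ 0] exI[of _ "Suc j"]) auto
    next
      case False
      then have "occ3 ys" using \<open>occ3 (y # ys)\<close> by simp
      then obtain i j where "i < j \<and> Suc j < length ys \<and> ys!i < ys!j \<and> ys!j < ys!Suc j" using Cons by blast
      then show ?thesis by (intro exI[of _ "Suc i"] exI[of _ "Suc j"]) auto
    qed
  next
    assume "\<exists>i j. i < j \<and> Suc j < length (y # ys) \<and> (y # ys)!i < (y # ys)!j \<and> (y # ys)!j < (y # ys)!Suc j"
    then obtain i j where h: "i < j" "Suc j < length (y # ys)" "(y # ys)!i < (y # ys)!j" "(y # ys)!j < (y # ys)!Suc j" by blast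
    obtain j' where j': "j = Suc j'" using h(1) by (cases j) auto
    show "occ3 (y # ys)"
    proof (cases i)
      case 0
      have "ascgt y ys" unfolding ascgt_iff using h j' 0 by (intro exI[of _ j']) auto
      then show ?thesis by simp
    next
      case (Suc i')
      have "occ3 ys" unfolding Cons using h j' Suc by (intro exI[of _ i'] exI[of _ j']) auto
      then show ?thesis by simp
    qed
  qed
qed

lemma occ123_occ3: "occurs_vinc [1,2,3] {1} w \<longleftrightarrow> occ3 w"
  using occ123_iff[of w] occ3_iff[of w] by argo

lemma ascgt_dec: "sorted_wrt (>) ys \<Longrightarrow> \<not> ascgt x ys"
  by (induction x ys rule: ascgt.induct) auto

lemma ascgt_UV:
  assumes "sorted_wrt (>) U" "sorted_wrt (>) V" "U \<noteq> []" "V \<noteq> []" "last U < hd V"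
  shows "ascgt x (U @ V) \<longleftrightarrow> x < last U"
  using assms
proof (induction U)
  case Nil then show ?case by simp
next
  case (Cons u U')
  show ?case
  proof (cases U')
    case Nil
    obtain v V' where "V = v # V'" using Cons.prems by (cases V) auto
    then show ?thesis using Nil Cons.prems ascgt_dec[of "v # V'" x] by auto
  next
    case (Cons u' U'')
    have "ascgt x (U' @ V) \<longleftrightarrow> x < last U'" using Cons.IH Cons.prems Cons by auto
    moreover have "u > u'" using Cons.prems Cons by auto
    ultimately show ?thesis using Cons Cons.prems by auto
  qed
qed

definition goodst :: "nat list \<Rightarrow> nat list \<Rightarrow> bool" where
  "goodst U V \<longleftrightarrow> sorted_wrt (>) U \<and> sorted_wrt (>) V \<and> (U \<noteq> [] \<longrightarrow> V \<noteq> [] \<and> last U < hd V)"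

lemma occ3_dec: "sorted_wrt (>) V \<Longrightarrow> \<not> occ3 V"
  by (induction V) (auto simp: ascgt_dec)

lemma occ3_UV: "goodst U V \<Longrightarrow> \<not> occ3 (U @ V)"
proof (induction U)
  case Nil then show ?case by (simp add: goodst_def occ3_dec)
next
  case (Cons u U')
  have g: "goodst U' V" using Cons.prems by (cases U') (auto simp: goodst_def)
  have "\<not> ascgt u (U' @ V)"
  proof (cases "U' = []")
    case True then show ?thesis using Cons.prems by (simp add: goodst_def ascgt_dec)
  next
    case False
    then have "ascgt u (U' @ V) \<longleftrightarrow> u < last U'" using ascgt_UV[of U' V u] g by (auto simp: goodst_def)
    moreover have "last U' < u" using False Cons.prems by (auto simp: goodst_def)
    ultimately show ?thesis by simp
  qed
  then show ?case using Cons.IH g by simp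
qed

lemma popf_V: "sorted_wrt (>) V \<Longrightarrow> popf [1,2,3] {1} x V = ([], V)"
proof (cases V)
  case Nil then show ?thesis by simp
next
  case (Cons v V')
  assume "sorted_wrt (>) V"
  then have "\<not> occurs_vinc [1,2,3] {1} (x # v # V')"
    unfolding occ123_occ3 using Cons ascgt_dec occ3_dec by auto
  then show ?thesis using Cons by simp
qed

lemma popf_pop: "goodst U V \<Longrightarrow> U \<noteq> [] \<Longrightarrow> x < last U \<Longrightarrow> popf [1,2,3] {1} x (U @ V) = (U, V)"
proof (induction U)
  case Nil then show ?case by simp
next
  case (Cons u U')
  have occ: "occurs_vinc [1,2,3] {1} (x # u # U' @ V)"
    unfolding occ123_occ3 using ascgt_UV[of "u # U'" V x] Cons.prems by (auto simp: goodst_def)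
  show ?case
  proof (cases "U' = []")
    case True
    then show ?thesis using occ popf_V[of V x] Cons.prems by (simp add: goodst_def)
  next
    case False
    have g: "goodst U' V" using Cons.prems by (cases U') (auto simp: goodst_def)
    have "popf [1,2,3] {1} x (U' @ V) = (U', V)" using Cons.IH g False Cons.prems by simp
    then show ?thesis using occ by simp
  qed
qed

lemma popf_nopop: "goodst U V \<Longrightarrow> \<not> (U \<noteq> [] \<and> x < last U) \<Longrightarrow> popf [1,2,3] {1} x (U @ V) = ([], U @ V)"
proof (cases "U @ V")
  case Nil then show ?thesis by simp
next
  case (Cons s ss)
  assume g: "goodst U V" and h: "\<not> (U \<noteq> [] \<and> x < last U)"
  have "\<not> ascgt x (U @ V)"
  proof (cases "U = []")
    case True then show ?thesis using g by (simp add: goodst_def ascgt_dec)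
  next
    case False then show ?thesis using ascgt_UV[of U V x] g h by (auto simp: goodst_def)
  qed
  then have "\<not> occurs_vinc [1,2,3] {1} (x # s # ss)"
    unfolding occ123_occ3 using Cons occ3_UV[OF g] by simp
  then show ?thesis using Cons by simp
qed

definition c132 :: "nat list \<Rightarrow> bool" where
  "c132 w \<longleftrightarrow> (\<exists>a b c. bef w a c \<and> bef w c b \<and> a < b \<and> b < c)"
definition c3214 :: "nat list \<Rightarrow> bool" where
  "c3214 w \<longleftrightarrow> (\<exists>a b c d. bef w c b \<and> bef w b a \<and> bef w a d \<and> a < b \<and> b < c \<and> c < d)"
definition c4213 :: "nat list \<Rightarrow> bool" where
  "c4213 w \<longleftrightarrow> (\<exists>a b c d. bef w d b \<and> bef w b a \<and> bef w a c \<and> a < b \<and> b < c \<and> c < d)"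
definition avB :: "nat list \<Rightarrow> bool" where
  "avB w \<longleftrightarrow> \<not> c132 w \<and> \<not> c3214 w \<and> \<not> c4213 w"

lemma bef_snocD: "bef (p @ [x]) u v \<Longrightarrow> x \<notin> set p \<Longrightarrow> v \<noteq> x \<Longrightarrow> bef p u v"
  by (auto simp: bef_append)
lemma bef_snoc_x: "bef (p @ [x]) u x \<Longrightarrow> x \<notin> set p \<Longrightarrow> u \<in> set p"
  by (auto simp: bef_append dest: bef_set)
lemma bef_snocI: "bef p u v \<Longrightarrow> bef (p @ [x]) u v"
  by (auto simp: bef_append)
lemma bef_snocI2: "u \<in> set p \<Longrightarrow> bef (p @ [x]) u x"
  by (auto simp: bef_append)

lemma avB_snoc:
  assumes "x \<notin> set p"
  shows "avB (p @ [x]) \<longleftrightarrow> avB p \<and> \<not> (\<exists>a c. bef p a c \<and> a < x \<and> x < c)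
     \<and> \<not> (\<exists>a b c. bef p c b \<and> bef p b a \<and> a < b \<and> b < c \<and> c < x)
     \<and> \<not> (\<exists>a b d. bef p d b \<and> bef p b a \<and> a < b \<and> b < x \<and> x < d)"
  (is "?L \<longleftrightarrow> ?R")
proof
  assume L: ?L
  have "avB p" using L unfolding avB_def c132_def c3214_def c4213_def by (meson bef_snocI)
  moreover have "\<not> (\<exists>a c. bef p a c \<and> a < x \<and> x < c)"
  proof
    assume "\<exists>a c. bef p a c \<and> a < x \<and> x < c"
    then obtain a c where "bef p a c" "a < x" "x < c" by blast
    moreover have "bef (p @ [x]) c x" using bef_set[OF \<open>bef p a c\<close>] by (simp add: bef_snocI2)
    ultimately have "c132 (p @ [x])" unfolding c132_def using bef_snocI by blast
    then show False using L by (simp add: avB_def)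
  qed
  moreover have "\<not> (\<exists>a b c. bef p c b \<and> bef p b a \<and> a < b \<and> b < c \<and> c < x)"
  proof
    assume "\<exists>a b c. bef p c b \<and> bef p b a \<and> a < b \<and> b < c \<and> c < x"
    then obtain a b c where h: "bef p c b" "bef p b a" "a < b" "b < c" "c < x" by blast
    moreover have "bef (p @ [x]) a x" using bef_set[OF h(2)] by (simp add: bef_snocI2)
    ultimately have "c3214 (p @ [x])" unfolding c3214_def using bef_snocI by blast
    then show False using L by (simp add: avB_def)
  qed
  moreover have "\<not> (\<exists>a b d. bef p d b \<and> bef p b a \<and> a < b \<and> b < x \<and> x < d)"
  proof
    assume "\<exists>a b d. bef p d b \<and> bef p b a \<and> a < b \<and> b < x \<and> x < d"
    then obtain a b d where h: "bef p d b" "bef p b a" "a < b" "b < x" "x < d" by blast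
    moreover have "bef (p @ [x]) a x" using bef_set[OF h(2)] by (simp add: bef_snocI2)
    ultimately have "c4213 (p @ [x])" unfolding c4213_def using bef_snocI by blast
    then show False using L by (simp add: avB_def)
  qed
  ultimately show ?R by blast
next
  assume R: ?R
  have n132: "\<not> c132 (p @ [x])"
  proof
    assume "c132 (p @ [x])"
    then obtain a b c where h: "bef (p @ [x]) a c" "bef (p @ [x]) c b" "a < b" "b < c"
      unfolding c132_def by blast
    show False
    proof (cases "b = x")
      case True
      then have "c \<in> set p" using bef_snoc_x h(2) assms by simp
      then have "c \<noteq> x" using assms by auto
      then have "bef p a c" using bef_snocD h(1) assms by blast
      then show False using R h True by blast
    next
      case False
      then have "bef p c b" using bef_snocD h(2) assms by blast
      then have "c \<noteq> x" using assms bef_set by blast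
      then have "bef p a c" using bef_snocD h(1) assms by blast
      then have "c132 p" unfolding c132_def using \<open>bef p c b\<close> h by blast
      then show False using R by (simp add: avB_def)
    qed
  qed
  have n3214: "\<not> c3214 (p @ [x])"
  proof
    assume "c3214 (p @ [x])"
    then obtain a b c d where h: "bef (p @ [x]) c b" "bef (p @ [x]) b a" "bef (p @ [x]) a d" "a < b" "b < c" "c < d"
      unfolding c3214_def by blast
    show False
    proof (cases "d = x")
      case True
      then have "a \<in> set p" using bef_snoc_x h(3) assms by simp
      then have "a \<noteq> x" using assms by auto
      then have "bef p b a" using bef_snocD h(2) assms by blast
      then have "b \<noteq> x" using assms bef_set by blast
      then have "bef p c b" using bef_snocD h(1) assms by blast
      then show False using R h True \<open>bef p b a\<close> by blast
    next
      case False
      then have "bef p a d" using bef_snocD h(3) assms by blast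
      then have "a \<noteq> x" using assms bef_set by blast
      then have "bef p b a" using bef_snocD h(2) assms by blast
      then have "b \<noteq> x" using assms bef_set by blast
      then have "bef p c b" using bef_snocD h(1) assms by blast
      then have "c3214 p" unfolding c3214_def using \<open>bef p a d\<close> \<open>bef p b a\<close> h by blast
      then show False using R by (simp add: avB_def)
    qed
  qed
  have n4213: "\<not> c4213 (p @ [x])"
  proof
    assume "c4213 (p @ [x])"
    then obtain a b c d where h: "bef (p @ [x]) d b" "bef (p @ [x]) b a" "bef (p @ [x]) a c" "a < b" "b < c" "c < d"
      unfolding c4213_def by blast
    show False
    proof (cases "c = x")
      case True
      then have "a \<in> set p" using bef_snoc_x h(3) assms by simp
      then have "a \<noteq> x" using assms by auto
      then have "bef p b a" using bef_snocD h(2) assms by blast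
      then have "b \<noteq> x" using assms bef_set by blast
      then have "bef p d b" using bef_snocD h(1) assms by blast
      then show False using R h True \<open>bef p b a\<close> by blast
    next
      case False
      then have "bef p a c" using bef_snocD h(3) assms by blast
      then have "a \<noteq> x" using assms bef_set by blast
      then have "bef p b a" using bef_snocD h(2) assms by blast
      then have "b \<noteq> x" using assms bef_set by blast
      then have "bef p d b" using bef_snocD h(1) assms by blast
      then have "c4213 p" unfolding c4213_def using \<open>bef p a c\<close> \<open>bef p b a\<close> h by blast
      then show False using R by (simp add: avB_def)
    qed
  qed
  show ?L using n132 n3214 n4213 by (simp add: avB_def)
qed

definition Inv :: "nat list \<Rightarrow> nat list \<Rightarrow> nat list \<Rightarrow> nat list \<Rightarrow> bool" where
  "Inv p out U V \<longleftrightarrow> (\<exists>Q. p = rev V @ Q @ rev U \<and> set Q = set out) \<and> sorted_wrt (>) (out @ U)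
     \<and> sorted_wrt (>) V \<and> (\<forall>y\<in>set (out @ U). y < last V \<or> hd V < y)
     \<and> (out \<noteq> [] \<longrightarrow> U \<noteq> [] \<and> last out < hd V) \<and> (U \<noteq> [] \<longrightarrow> V \<noteq> [] \<and> last U < hd V)
     \<and> (p \<noteq> [] \<longrightarrow> V \<noteq> [])"

lemma dec_bounds: "sorted_wrt (>) (V::nat list) \<Longrightarrow> y \<in> set V \<Longrightarrow> last V \<le> y \<and> y \<le> hd V"
proof (induction V)
  case Nil then show ?case by simp
next
  case (Cons v V)
  then show ?case using last_in_set[of V] by (cases V) auto
qed

lemma bef_hd_last: "sorted_wrt (>) (V::nat list) \<Longrightarrow> V \<noteq> [] \<Longrightarrow> hd V \<noteq> last V \<Longrightarrow> bef V (hd V) (last V)"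
  by (cases V) auto

lemma inv_231:
  assumes inv: "Inv p out U V" and dp: "distinct p"
  shows "\<not> c231 (out @ U @ V)"
proof
  assume "c231 (out @ U @ V)"
  then obtain a b c where h: "bef ((out @ U) @ V) b c" "bef ((out @ U) @ V) c a" "a < b" "b < c"
    unfolding c231_def by auto
  obtain Q where Q: "p = rev V @ Q @ rev U" "set Q = set out" using inv unfolding Inv_def by blast
  have disj: "set (out @ U) \<inter> set V = {}" using dp Q by auto
  have sA: "sorted_wrt (>) (out @ U)" and sV: "sorted_wrt (>) V" using inv unfolding Inv_def by blast+
  have outside: "\<forall>y\<in>set (out @ U). y < last V \<or> hd V < y" using inv unfolding Inv_def by blast
  have "\<not> bef (out @ U) b c" using bef_sorted[OF sA, of b c] h(4) by auto
  moreover have "\<not> bef V b c" using bef_sorted[OF sV, of b c] h(4) by auto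
  moreover have "bef (out @ U) b c \<or> bef V b c \<or> (b \<in> set (out @ U) \<and> c \<in> set V)"
    using h(1) by (simp only: bef_append)
  ultimately have bc: "b \<in> set (out @ U)" "c \<in> set V" by blast+
  then have "c \<notin> set (out @ U)" using disj by auto
  then have "bef V c a" using bef_appR h(2) by blast
  then have "a \<in> set V" using bef_set by blast
  then have "last V \<le> a" "c \<le> hd V" using dec_bounds[OF sV] bc by auto
  moreover have "b < last V \<or> hd V < b" using outside bc(1) by blast
  ultimately show False using h(3,4) by linarith
qed

lemma bef_p3: "bef (rev V @ Q @ rev U) u v \<longleftrightarrow> bef V v u \<or> bef Q u v \<or> bef U v u
   \<or> (u \<in> set V \<and> v \<in> set Q) \<or> (u \<in> set V \<and> v \<in> set U) \<or> (u \<in> set Q \<and> v \<in> set U)"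
  by (auto simp: bef_append bef_rev)

lemma last_le: "sorted_wrt (>) (L::nat list) \<Longrightarrow> y \<in> set L \<Longrightarrow> last L \<le> y"
  using dec_bounds by blast

lemma step_success:
  assumes "avB (p @ [x])" "Inv (p @ [x]) out' U' V'" "distinct (p @ [x])" "M' = out' @ U' @ V'"
  shows "(\<not> c231 M' \<longleftrightarrow> avB (p @ [x])) \<and> (avB (p @ [x]) \<longrightarrow> (\<exists>o2 U2 V2. (out', U' @ V') = (o2, U2 @ V2) \<and> Inv (p @ [x]) o2 U2 V2))"
  using assms inv_231 by blast

lemma step_fail:
  assumes "c231 M'" "\<not> avB (p @ [x])"
  shows "(\<not> c231 M' \<longleftrightarrow> avB (p @ [x])) \<and> (avB (p @ [x]) \<longrightarrow> R)"
  using assms by blast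

lemma step:
  assumes inv: "Inv p out U V" and dp: "distinct (p @ [x])" and av: "avB p"
  defines "P \<equiv> fst (popf [1,2,3] {1} x (U @ V))" and "S \<equiv> snd (popf [1,2,3] {1} x (U @ V))"
  shows "(\<not> c231 (out @ P @ x # S) \<longleftrightarrow> avB (p @ [x])) \<and>
    (avB (p @ [x]) \<longrightarrow> (\<exists>o2 U2 V2. (out @ P, x # S) = (o2, U2 @ V2) \<and> Inv (p @ [x]) o2 U2 V2))"
proof -
  obtain Q where Q: "p = rev V @ Q @ rev U" "set Q = set out" using inv unfolding Inv_def by blast
  have sOU: "sorted_wrt (>) (out @ U)" and sV: "sorted_wrt (>) V" using inv unfolding Inv_def by blast+
  have outside: "\<forall>y\<in>set (out @ U). y < last V \<or> hd V < y" using inv unfolding Inv_def by blast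
  have iO: "out \<noteq> [] \<longrightarrow> U \<noteq> [] \<and> last out < hd V" and iU: "U \<noteq> [] \<longrightarrow> V \<noteq> [] \<and> last U < hd V"
    and iP: "p \<noteq> [] \<longrightarrow> V \<noteq> []" using inv unfolding Inv_def by blast+
  have xnp: "x \<notin> set p" and dpp: "distinct p" using dp by auto
  have g: "goodst U V" using sOU sV iU by (auto simp: goodst_def sorted_wrt_append)
  have sU: "sorted_wrt (>) U" and sO: "sorted_wrt (>) out" using sOU by (auto simp: sorted_wrt_append)
  have OU: "\<forall>a\<in>set out. \<forall>b\<in>set U. b < a" using sOU by (auto simp: sorted_wrt_append)
  have xV: "x \<notin> set V" and xU: "x \<notin> set U" and xQ: "x \<notin> set Q" using xnp Q by auto
  have xO: "x \<notin> set out" using xQ Q by simp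
  show ?thesis
  proof (cases "V = []")
    case True
    then have "p = []" using iP by blast
    then have U0: "U = []" and Q0: "Q = []" using Q by auto
    then have O0: "out = []" using Q by simp
    have PS: "P = []" "S = []" unfolding P_def S_def using U0 True by simp_all
    have "avB (p @ [x])" using \<open>p = []\<close> by (simp add: avB_def c132_def c3214_def c4213_def)
    moreover have "Inv (p @ [x]) [] [] [x]" using \<open>p = []\<close> unfolding Inv_def by simp
    ultimately show ?thesis using step_success[of p x "[]" "[]" "[x]" "[x]"] dp PS O0 by simp
  next
    case Vne: False
    define l where "l = last V"
    define h where "h = hd V"
    have Vb: "\<forall>y\<in>set V. l \<le> y \<and> y \<le> h" using dec_bounds[OF sV] l_def h_def by blast
    have lV: "l \<in> set V" and hV: "h \<in> set V" using Vne l_def h_def by auto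
    have lh: "l \<le> h" using Vb lV by blast
    have xl: "x \<noteq> l" and xh: "x \<noteq> h" using lV hV xV by auto
    show ?thesis
    proof (cases "U = []")
      case U0: True
      then have O0: "out = []" using iO by blast
      then have Q0: "Q = []" using Q by simp
      have pV: "p = rev V" using Q U0 Q0 by simp
      have PS: "P = []" "S = V" unfolding P_def S_def using U0 popf_V[OF sV] by simp_all
      have pb: "\<And>u v. bef p u v \<Longrightarrow> u < v"
      proof -
        fix u v assume "bef p u v"
        then have "bef V v u" using pV bef_rev by simp
        then show "u < v" using bef_sorted[OF sV] by blast
      qed
      have pset: "set p = set V" using pV by simp
      consider "h < x" | "l < x \<and> x < h" | "x < l" using xl xh by linarith
      then show ?thesis
      proof cases
        case 1
        have "avB (p @ [x])" unfolding avB_snoc[OF xnp]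
        proof (intro conjI)
          show "avB p" by fact
          show "\<not> (\<exists>a c. bef p a c \<and> a < x \<and> x < c)" using 1 Vb pset bef_set by fastforce
          show "\<not> (\<exists>a b c. bef p c b \<and> bef p b a \<and> a < b \<and> b < c \<and> c < x)" using pb by fastforce
          show "\<not> (\<exists>a b d. bef p d b \<and> bef p b a \<and> a < b \<and> b < x \<and> x < d)" using 1 Vb pset bef_set by fastforce
        qed
        moreover have "Inv (p @ [x]) [] [] (x # V)" unfolding Inv_def
          using pV sV 1 Vb Vne by (auto simp: h_def)
        ultimately show ?thesis using step_success[of p x "[]" "[]" "x # V" "x # V"] dp PS O0 by simp
      next
        case 2
        have "l \<noteq> h" using 2 by simp
        have bhl: "bef V h l" using bef_hd_last[OF sV Vne] \<open>l \<noteq> h\<close> l_def h_def by simp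
        have "c231 (x # V)" unfolding c231_def using bhl 2 hV
          by (intro exI[of _ l] exI[of _ x] exI[of _ h]) simp
        moreover have "\<not> avB (p @ [x])" unfolding avB_snoc[OF xnp]
          using bhl 2 pV bef_rev by blast
        ultimately show ?thesis using step_fail PS O0 by simp
      next
        case 3
        have "avB (p @ [x])" unfolding avB_snoc[OF xnp]
        proof (intro conjI)
          show "avB p" by fact
          show "\<not> (\<exists>a c. bef p a c \<and> a < x \<and> x < c)" using 3 Vb pset bef_set by fastforce
          show "\<not> (\<exists>a b c. bef p c b \<and> bef p b a \<and> a < b \<and> b < c \<and> c < x)" using 3 Vb pset bef_set by fastforce
          show "\<not> (\<exists>a b d. bef p d b \<and> bef p b a \<and> a < b \<and> b < x \<and> x < d)" using 3 Vb pset bef_set by fastforce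
        qed
        moreover have "Inv (p @ [x]) [] [x] V" unfolding Inv_def
          using pV sV 3 Vb Vne lV lh unfolding h_def[symmetric] l_def[symmetric] by auto
        ultimately show ?thesis using step_success[of p x "[]" "[x]" "V" "x # V"] dp PS O0 by simp
      qed
    next
      case Une: False
      define d where "d = last U"
      define e where "e = hd U"
      have Ub: "\<forall>y\<in>set U. d \<le> y \<and> y \<le> e" using dec_bounds[OF sU] d_def e_def by blast
      have dU: "d \<in> set U" and eU: "e \<in> set U" using Une d_def e_def by auto
      have dh: "d < h" using iU Une d_def h_def by blast
      have dl: "d < l" using outside dU dh l_def h_def by fastforce
      have xd: "x \<noteq> d" and xe: "x \<noteq> e" using dU eU xU by auto
      have Qb: "\<forall>y\<in>set Q. e < y" using OU eU Q by auto
      have dist3: "set V \<inter> set Q = {}" "set V \<inter> set U = {}" "set Q \<inter> set U = {}" using dpp Q by auto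
      consider "x < d" | "d < x \<and> x < e" | "e < x" using xd xe by linarith
      then show ?thesis
      proof cases
        case 1
        have PS: "P = U" "S = V" unfolding P_def S_def using popf_pop[OF g Une] 1 d_def by simp_all
        have all_gt: "\<forall>y\<in>set p. x < y"
        proof
          fix y assume "y \<in> set p"
          then have "y \<in> set V \<or> y \<in> set Q \<or> y \<in> set U" using Q by auto
          then show "x < y" using Vb Qb Ub 1 dl dh eU by force
        qed
        have "avB (p @ [x])" unfolding avB_snoc[OF xnp]
          using all_gt av bef_set by fastforce
        moreover have "Inv (p @ [x]) (out @ U) [x] V" unfolding Inv_def
        proof (intro conjI)
          show "\<exists>Q'. p @ [x] = rev V @ Q' @ rev [x] \<and> set Q' = set (out @ U)"
            using Q by (intro exI[of _ "Q @ rev U"]) auto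
          have "\<forall>y\<in>set (out @ U). x < y"
          proof
            fix y assume "y \<in> set (out @ U)"
            then have "y \<in> set out \<or> y \<in> set U" by simp
            then have "d \<le> y" using OU dU Ub by force
            then show "x < y" using 1 by simp
          qed
          then show "sorted_wrt (>) ((out @ U) @ [x])" using sOU
            by (simp add: sorted_wrt_append)
          show "sorted_wrt (>) V" by fact
          show "\<forall>y\<in>set ((out @ U) @ [x]). y < last V \<or> hd V < y" using outside 1 dl l_def by auto
          show "out @ U \<noteq> [] \<longrightarrow> [x] \<noteq> [] \<and> last (out @ U) < hd V" using Une dh d_def h_def by simp
          show "[x] \<noteq> [] \<longrightarrow> V \<noteq> [] \<and> last [x] < hd V" using Vne 1 dh h_def by simp
          show "p @ [x] \<noteq> [] \<longrightarrow> V \<noteq> []" using Vne by simp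
        qed
        ultimately show ?thesis using step_success[of p x "out @ U" "[x]" V "out @ U @ x # V"] dp PS by simp
      next
        case 2
        have PS: "P = []" "S = U @ V" unfolding P_def S_def using popf_nopop[OF g] 2 d_def by simp_all
        have "d \<noteq> e" using 2 by simp
        have bed: "bef U e d" using bef_hd_last[OF sU Une] \<open>d \<noteq> e\<close> d_def e_def by simp
        have "c231 (out @ x # U @ V)" unfolding c231_def using bed 2 eU
          by (intro exI[of _ d] exI[of _ x] exI[of _ e]) (simp add: bef_append)
        moreover have "bef p d e" using bed Q by (simp add: bef_p3)
        then have "\<not> avB (p @ [x])" unfolding avB_snoc[OF xnp] using 2 by blast
        ultimately show ?thesis using step_fail PS by simp
      next
        case 3
        have PS: "P = []" "S = U @ V" unfolding P_def S_def using popf_nopop[OF g] 3 Ub dU d_def by fastforce+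
        show ?thesis
        proof (cases "l < x \<and> x < h")
          case True
          have "l \<noteq> h" using True by simp
          have bhl: "bef V h l" using bef_hd_last[OF sV Vne] \<open>l \<noteq> h\<close> l_def h_def by simp
          have "c231 (out @ x # U @ V)" unfolding c231_def using bhl True hV
            by (intro exI[of _ l] exI[of _ x] exI[of _ h]) (simp add: bef_append)
          moreover have "bef p l h" using bhl Q by (simp add: bef_p3)
          then have "\<not> avB (p @ [x])" unfolding avB_snoc[OF xnp] using True by blast
          ultimately show ?thesis using step_fail PS by simp
        next
          case nlh: False
          then have xr: "x < l \<or> h < x" using xl xh by linarith
          show ?thesis
          proof (cases "out \<noteq> [] \<and> last out < x")
            case True
            define f where "f = last out"
            have fO: "f \<in> set out" using True f_def by simp
            have fd: "d < f" using OU fO dU by blast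
            have fh: "f < h" using iO True f_def h_def by blast
            have "c231 (out @ x # U @ V)" unfolding c231_def using True fO dU fd f_def
              by (intro exI[of _ d] exI[of _ f] exI[of _ x]) (simp add: bef_append)
            moreover have b1: "bef p h f" using Q hV fO by (simp add: bef_p3)
            moreover have b2: "bef p f d" using Q dU fO by (simp add: bef_p3)
            have "\<not> avB (p @ [x])"
            proof (cases "x < h")
              case True
              then show ?thesis unfolding avB_snoc[OF xnp] using b1 b2 fd \<open>out \<noteq> [] \<and> last out < x\<close> f_def by blast
            next
              case False
              then have "h < x" using xh by simp
              then show ?thesis unfolding avB_snoc[OF xnp] using b1 b2 fd fh by blast
            qed
            ultimately show ?thesis using step_fail PS by simp
          next
            case False
            have Ogt: "\<forall>y\<in>set out. x < y"
            proof
              fix y assume "y \<in> set out"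
              then have "out \<noteq> []" by auto
              then have "x < last out" using False xO last_in_set[of out] by (cases "x < last out") auto
              moreover have "last out \<le> y" using last_le[OF sO \<open>y \<in> set out\<close>] .
              ultimately show "x < y" by simp
            qed
            have QgtX: "\<forall>y\<in>set Q. x < y" using Ogt Q by simp
            have UltX: "\<forall>y\<in>set U. y < x" using Ub 3 by force
            have "avB (p @ [x])" unfolding avB_snoc[OF xnp]
            proof (intro conjI)
              show "avB p" by fact
              show "\<not> (\<exists>a c. bef p a c \<and> a < x \<and> x < c)"
              proof
                assume "\<exists>a c. bef p a c \<and> a < x \<and> x < c"
                then obtain a c where h1: "bef p a c" "a < x" "x < c" by blast
                have aQ: "a \<notin> set Q" using QgtX h1 by force
                have cU: "c \<notin> set U" using UltX h1 by force
                have "bef V c a \<or> bef Q a c \<or> bef U c a \<or> (a \<in> set V \<and> c \<in> set Q) \<or> (a \<in> set V \<and> c \<in> set U) \<or> (a \<in> set Q \<and> c \<in> set U)"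
                  using h1(1) Q by (simp add: bef_p3)
                then have "(a \<in> set V \<and> c \<in> set V) \<or> (a \<in> set V \<and> c \<in> set Q)"
                  using aQ cU bef_set by blast
                then show False
                proof
                  assume "a \<in> set V \<and> c \<in> set V"
                  then show False using Vb h1 xr by force
                next
                  assume ac: "a \<in> set V \<and> c \<in> set Q"
                  then have "h < x" using Vb h1 xr by force
                  have "out \<noteq> []" using ac Q by auto
                  then have "last out < h" using iO h_def by blast
                  moreover have "x < last out" using Ogt \<open>out \<noteq> []\<close> by simp
                  ultimately show False using \<open>h < x\<close> by simp
                qed
              qed
              show "\<not> (\<exists>a b c. bef p c b \<and> bef p b a \<and> a < b \<and> b < c \<and> c < x)"
              proof
                assume "\<exists>a b c. bef p c b \<and> bef p b a \<and> a < b \<and> b < c \<and> c < x"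
                then obtain a b c where h1: "bef p c b" "bef p b a" "a < b" "b < c" "c < x" by blast
                have nQ: "a \<notin> set Q" "b \<notin> set Q" "c \<notin> set Q" using QgtX h1 by force+
                have "bef V b c \<or> bef Q c b \<or> bef U b c \<or> (c \<in> set V \<and> b \<in> set Q) \<or> (c \<in> set V \<and> b \<in> set U) \<or> (c \<in> set Q \<and> b \<in> set U)"
                  using h1(1) Q by (simp add: bef_p3)
                moreover have "\<not> bef V b c" using bef_sorted[OF sV, of b c] h1 by auto
                moreover have "\<not> bef U b c" using bef_sorted[OF sU, of b c] h1 by auto
                ultimately have bU: "b \<in> set U" using nQ bef_set by blast
                then have "b \<notin> set V" "b \<notin> set Q" using dist3 by auto
                have "bef V a b \<or> bef Q b a \<or> bef U a b \<or> (b \<in> set V \<and> a \<in> set Q) \<or> (b \<in> set V \<and> a \<in> set U) \<or> (b \<in> set Q \<and> a \<in> set U)"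
                  using h1(2) Q by (simp add: bef_p3)
                then have "bef U a b" using \<open>b \<notin> set V\<close> \<open>b \<notin> set Q\<close> bef_set by blast
                then show False using bef_sorted[OF sU, of a b] h1 by auto
              qed
              show "\<not> (\<exists>a b d. bef p d b \<and> bef p b a \<and> a < b \<and> b < x \<and> x < d)"
              proof
                assume "\<exists>a b d. bef p d b \<and> bef p b a \<and> a < b \<and> b < x \<and> x < d"
                then obtain a b c where h1: "bef p c b" "bef p b a" "a < b" "b < x" "x < c" by blast
                have nQ: "a \<notin> set Q" "b \<notin> set Q" using QgtX h1 by force+
                have "bef V a b \<or> bef Q b a \<or> bef U a b \<or> (b \<in> set V \<and> a \<in> set Q) \<or> (b \<in> set V \<and> a \<in> set U) \<or> (b \<in> set Q \<and> a \<in> set U)"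
                  using h1(2) Q by (simp add: bef_p3)
                moreover have "\<not> bef V a b" using bef_sorted[OF sV, of a b] h1 by auto
                moreover have "\<not> bef U a b" using bef_sorted[OF sU, of a b] h1 by auto
                ultimately have bV: "b \<in> set V" using nQ bef_set by blast
                then have "b \<notin> set U" "b \<notin> set Q" using dist3 by auto
                have "bef V b c \<or> bef Q c b \<or> bef U b c \<or> (c \<in> set V \<and> b \<in> set Q) \<or> (c \<in> set V \<and> b \<in> set U) \<or> (c \<in> set Q \<and> b \<in> set U)"
                  using h1(1) Q by (simp add: bef_p3)
                then have "bef V b c" using \<open>b \<notin> set U\<close> \<open>b \<notin> set Q\<close> bef_set by blast
                then show False using bef_sorted[OF sV, of b c] h1 by auto
              qed
            qed
            moreover have "Inv (p @ [x]) out (x # U) V" unfolding Inv_def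
            proof (intro conjI)
              show "\<exists>Q'. p @ [x] = rev V @ Q' @ rev (x # U) \<and> set Q' = set out"
                using Q by (intro exI[of _ Q]) auto
              have "sorted_wrt (>) (x # U)" using sU UltX by simp
              then show "sorted_wrt (>) (out @ x # U)" using sOU Ogt OU
                by (auto simp: sorted_wrt_append)
              show "sorted_wrt (>) V" by fact
              show "\<forall>y\<in>set (out @ x # U). y < last V \<or> hd V < y" using outside xr l_def h_def by auto
              show "out \<noteq> [] \<longrightarrow> x # U \<noteq> [] \<and> last out < hd V" using iO by simp
              show "x # U \<noteq> [] \<longrightarrow> V \<noteq> [] \<and> last (x # U) < hd V" using iU Une by simp
              show "p @ [x] \<noteq> [] \<longrightarrow> V \<noteq> []" using Vne by simp
            qed
            ultimately show ?thesis using step_success[of p x out "x # U" V "out @ x # U @ V"] dp PS by simp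
          qed
        qed
      qed
    qed
  qed
qed

lemma bef_ins: "bef (A @ B) u v \<Longrightarrow> bef (A @ x # B) u v"
  by (auto simp: bef_append)

lemma c231_ins: "c231 (A @ B) \<Longrightarrow> c231 (A @ x # B)"
  unfolding c231_def using bef_ins by blast

lemma main:
  "distinct p \<Longrightarrow> (\<not> c231 (sc_aux [1,2,3] {1} p []) \<longleftrightarrow> avB p) \<and>
     (avB p \<longrightarrow> (\<exists>out U V. run [1,2,3] {1} p [] = (out, U @ V) \<and> Inv p out U V))"
proof (induction p rule: rev_induct)
  case Nil
  have "\<not> c231 []" by (simp add: c231_def)
  moreover have "avB []" by (simp add: avB_def c132_def c3214_def c4213_def)
  moreover have "Inv [] [] [] []" by (simp add: Inv_def)
  ultimately show ?case by simp
next
  case (snoc x p)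
  have dp: "distinct p" and xnp: "x \<notin> set p" using snoc.prems by auto
  note IH = snoc.IH[OF dp]
  define r where "r = run [1,2,3] {1} p []"
  define P where "P = fst (popf [1,2,3] {1} x (snd r))"
  define S where "S = snd (popf [1,2,3] {1} x (snd r))"
  have runx: "run [1,2,3] {1} (p @ [x]) [] = (fst r @ P, x # S)"
    unfolding r_def P_def S_def by (simp add: run_snoc)
  have Mx: "sc_aux [1,2,3] {1} (p @ [x]) [] = fst r @ P @ x # S"
    using sc_run[of "[1,2,3]" "{1}" "p @ [x]" "[]"] runx by simp
  have Mp: "sc_aux [1,2,3] {1} p [] = fst r @ P @ S"
    using sc_run[of "[1,2,3]" "{1}" p "[]"] popf_app[of "[1,2,3]" "{1}" x "snd r"] unfolding r_def P_def S_def
    by simp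
  show ?case
  proof (cases "avB p")
    case True
    then obtain out U V where ouv: "r = (out, U @ V)" "Inv p out U V" using IH r_def by blast
    have st: "(\<not> c231 (out @ P @ x # S) \<longleftrightarrow> avB (p @ [x])) \<and>
      (avB (p @ [x]) \<longrightarrow> (\<exists>o2 U2 V2. (out @ P, x # S) = (o2, U2 @ V2) \<and> Inv (p @ [x]) o2 U2 V2))"
      using step[OF ouv(2) snoc.prems True] unfolding P_def S_def ouv(1) by simp
    then show ?thesis using Mx runx ouv(1) by simp
  next
    case False
    then have "\<not> avB (p @ [x])" using avB_snoc[OF xnp] by simp
    moreover have "c231 (fst r @ P @ S)" using IH False Mp by simp
    then have "c231 (sc_aux [1,2,3] {1} (p @ [x]) [])" using Mx c231_ins[of "fst r @ P" S x] by simp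
    ultimately show ?thesis by simp
  qed
qed

lemma perm_sorted:
  assumes "distinct L" "set L = {1..n}"
  shows "sorted_wrt (<) L \<longleftrightarrow> L = [1..<n+1]"
proof
  assume "sorted_wrt (<) L"
  then have "sorted L" by (simp add: strict_sorted_iff)
  have "set [1..<n+1] = {1..n}" by (simp only: set_upt Suc_eq_plus1[symmetric] atLeastLessThanSuc_atLeastAtMost)
  then have eq: "set L = set [1..<n+1]" using assms(2) by simp
  show "L = [1..<n+1]" by (rule sorted_distinct_set_unique[OF \<open>sorted L\<close> assms(1) sorted_upt distinct_upt eq])
next
  assume "L = [1..<n+1]"
  then show "sorted_wrt (<) L" by (simp only: sorted_wrt_upt)
qed

lemma sortable_iff:
  assumes "is_perm p"
  shows "west_s (SC [1,2,3] {1} p) = [1..<length p + 1] \<longleftrightarrow> avB p"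
proof -
  let ?w = "SC [1,2,3] {1} p"
  have mw: "mset ?w = mset p" unfolding SC_def using sc_mset by simp
  have dp: "distinct p" using assms by (simp add: is_perm_def)
  then have dw: "distinct ?w" using mw mset_eq_imp_distinct_iff by blast
  have mW: "mset (west_s ?w) = mset p" unfolding west_s_def SC_def using sc_mset mw by (simp add: SC_def)
  have "distinct (west_s ?w)" using dp mW mset_eq_imp_distinct_iff by blast
  moreover have "set (west_s ?w) = {1..length p}" using mset_eq_setD[OF mW] assms by (simp add: is_perm_def)
  ultimately have "sorted_wrt (<) (west_s ?w) \<longleftrightarrow> west_s ?w = [1..<length p + 1]"
    by (rule perm_sorted)
  then have "west_s ?w = [1..<length p + 1] \<longleftrightarrow> sorted_wrt (<) (W ?w)"
    unfolding west_s_def SC_def by simp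
  also have "\<dots> \<longleftrightarrow> \<not> c231 ?w" using West_iff[OF dw] .
  also have "\<dots> \<longleftrightarrow> avB p" using main[OF dp] unfolding SC_def by blast
  finally show ?thesis .
qed

lemma bef_chain3:
  assumes "distinct t" "bef t a b" "bef t b c"
  shows "\<exists>i j k. i < j \<and> j < k \<and> k < length t \<and> t!i = a \<and> t!j = b \<and> t!k = c"
proof -
  obtain i j1 where h1: "i < j1" "j1 < length t" "t!i = a" "t!j1 = b" using bef_ex[OF assms(2)] by blast
  obtain j2 k where h2: "j2 < k" "k < length t" "t!j2 = b" "t!k = c" using bef_ex[OF assms(3)] by blast
  have "j1 = j2" using h1 h2 assms(1) nth_eq_iff_index_eq by (metis order.strict_trans)
  then show ?thesis using h1 h2 by blast
qed

lemma bef_chain4: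
  assumes "distinct t" "bef t a b" "bef t b c" "bef t c d"
  shows "\<exists>i j k m. i < j \<and> j < k \<and> k < m \<and> m < length t \<and> t!i = a \<and> t!j = b \<and> t!k = c \<and> t!m = d"
proof -
  obtain i j k1 where h1: "i < j" "j < k1" "k1 < length t" "t!i = a" "t!j = b" "t!k1 = c"
    using bef_chain3[OF assms(1-3)] by blast
  obtain k2 m where h2: "k2 < m" "m < length t" "t!k2 = c" "t!m = d" using bef_ex[OF assms(4)] by blast
  have "k1 = k2" using h1 h2 assms(1) nth_eq_iff_index_eq by (metis order.strict_trans)
  then show ?thesis using h1 h2 by blast
qed

lemma contains_map:
  assumes "contains p t"
  shows "\<exists>f. (\<forall>i j. i < j \<longrightarrow> j < length t \<longrightarrow> bef p (f i) (f j)) \<and>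
             (\<forall>i j. i < length t \<longrightarrow> j < length t \<longrightarrow> (t!i < t!j \<longleftrightarrow> f i < f j))"
proof -
  obtain idx where h: "length idx = length t" "sorted_wrt (<) idx" "\<forall>k<length idx. idx!k < length p"
    "\<forall>k<length t. \<forall>l<length t. t!k < t!l \<longleftrightarrow> p!(idx!k) < p!(idx!l)"
    using assms unfolding contains_def occurs_vinc_def by blast
  show ?thesis
  proof (intro exI[of _ "\<lambda>k. p!(idx!k)"] conjI allI impI)
    fix i j assume ij: "i < j" "j < length t"
    then have "idx!i < idx!j" using h(1,2) sorted_wrt_nth_less by fastforce
    moreover have "idx!j < length p" using h(1,3) ij by simp
    ultimately show "bef p (p!(idx!i)) (p!(idx!j))" by (rule bef_nth)
  next
    fix i j assume "i < length t" "j < length t"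
    then show "t!i < t!j \<longleftrightarrow> p!(idx!i) < p!(idx!j)" using h(4) by blast
  qed
qed

lemma transfer:
  assumes "contains p t" "distinct t" "avB p"
  shows "avB t"
proof -
  obtain f where f1: "\<And>i j. i < j \<Longrightarrow> j < length t \<Longrightarrow> bef p (f i) (f j)"
    and f2: "\<And>i j. i < length t \<Longrightarrow> j < length t \<Longrightarrow> (t!i < t!j \<longleftrightarrow> f i < f j)"
    using contains_map[OF assms(1)] by blast
  have "\<not> c132 t"
  proof
    assume "c132 t"
    then obtain a b c where h: "bef t a c" "bef t c b" "a < b" "b < c" unfolding c132_def by blast
    obtain i j k where ijk: "i < j" "j < k" "k < length t" "t!i = a" "t!j = c" "t!k = b"
      using bef_chain3[OF assms(2) h(1,2)] by blast
    have "bef p (f i) (f j)" "bef p (f j) (f k)" using f1 ijk by auto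
    moreover have "f i < f k" "f k < f j" using f2 ijk h by auto
    ultimately have "c132 p" unfolding c132_def by blast
    then show False using assms(3) by (simp add: avB_def)
  qed
  moreover have "\<not> c3214 t"
  proof
    assume "c3214 t"
    then obtain a b c d where h: "bef t c b" "bef t b a" "bef t a d" "a < b" "b < c" "c < d"
      unfolding c3214_def by blast
    obtain i j k m where ijk: "i < j" "j < k" "k < m" "m < length t" "t!i = c" "t!j = b" "t!k = a" "t!m = d"
      using bef_chain4[OF assms(2) h(1,2,3)] by blast
    have "bef p (f i) (f j)" "bef p (f j) (f k)" "bef p (f k) (f m)" using f1 ijk by auto
    moreover have "f k < f j" "f j < f i" "f i < f m" using f2 ijk h by auto
    ultimately have "c3214 p" unfolding c3214_def by blast
    then show False using assms(3) by (simp add: avB_def)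
  qed
  moreover have "\<not> c4213 t"
  proof
    assume "c4213 t"
    then obtain a b c d where h: "bef t d b" "bef t b a" "bef t a c" "a < b" "b < c" "c < d"
      unfolding c4213_def by blast
    obtain i j k m where ijk: "i < j" "j < k" "k < m" "m < length t" "t!i = d" "t!j = b" "t!k = a" "t!m = c"
      using bef_chain4[OF assms(2) h(1,2,3)] by blast
    have "bef p (f i) (f j)" "bef p (f j) (f k)" "bef p (f k) (f m)" using f1 ijk by auto
    moreover have "f k < f j" "f j < f m" "f m < f i" using f2 ijk h by auto
    ultimately have "c4213 p" unfolding c4213_def by blast
    then show False using assms(3) by (simp add: avB_def)
  qed
  ultimately show ?thesis by (simp add: avB_def)
qed

lemma Sort_mem: "p \<in> Sort tau adj \<longleftrightarrow> is_perm p \<and> west_s (SC tau adj p) = [1..<length p + 1]"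
proof
  assume "p \<in> Sort tau adj"
  then obtain n where "p \<in> Sort_n tau adj n" unfolding Sort_def by blast
  then show "is_perm p \<and> west_s (SC tau adj p) = [1..<length p + 1]"
    unfolding Sort_n_def perms_def by auto
next
  assume h: "is_perm p \<and> west_s (SC tau adj p) = [1..<length p + 1]"
  then have "length p \<ge> 1" by (cases p) (auto simp: is_perm_def)
  moreover have "p \<in> Sort_n tau adj (length p)" using h unfolding Sort_n_def perms_def by auto
  ultimately show "p \<in> Sort tau adj" unfolding Sort_def by auto
qed

theorem mainTheorem14:
  shows "perm_class (Sort pat_1_23 adj_1_23)"
  unfolding perm_class_def
proof (intro conjI ballI allI impI)
  fix p assume "p \<in> Sort pat_1_23 adj_1_23"
  then show "is_perm p" using Sort_mem by blast
next
  fix p t assume p: "p \<in> Sort pat_1_23 adj_1_23" and t: "is_perm t \<and> contains p t"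
  have "is_perm p" and ws: "west_s (SC [1,2,3] {1} p) = [1..<length p + 1]" using p Sort_mem by blast+
  then have "avB p" using sortable_iff by blast
  moreover have "distinct t" using t by (simp add: is_perm_def)
  ultimately have "avB t" using transfer t by blast
  then have "west_s (SC [1,2,3] {1} t) = [1..<length t + 1]" using sortable_iff t by blast
  then show "t \<in> Sort pat_1_23 adj_1_23" using Sort_mem t by blast
qed

end
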